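(* Let $A, B, C, F \in \mathbb{R}^{n\times n}$ with $C$ invertible, and consider the matrix equation $$AX + B\lvert CX\rvert = F$$ in the unknown $X \in \mathbb{R}^{n\times n}$. Let $I$ be the $n\times n$ identity matrix and set $R = I\otimes AC^{-1}$ and $S = I\otimes B$. Suppose each diagonal entry of $R+S$ has the same sign as the corresponding diagonal entry of $R-S$. Then the equation has exactly one solution if either of the following holds: (i) $R+S$ and $R-S$ are both strictly diagonally dominant by columns; (ii) $R+S$, $R-S$ and all column representative matrices of $\{R+S, R-S\}$ are irreducibly diagonally dominant by columns.
   Context: $\otimes$ denotes the Kronecker product and $\lvert M\rvert$ the entrywise absolute value. For a set $\{M_1,M_2\}$ of $N\times N$ matrices, a column representative is a matrix whose $j$-th column is either the $j$-th column of $M_1$ or the $j$-th column of $M_2$, for each $j=1,\dots,N$. *)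

theory Defs
  imports "HOL-Analysis.Analysis"
begin

definition mat_abs :: "real^'n^'m \<Rightarrow> real^'n^'m" where
  "mat_abs M = (\<chi> i j. \<bar>M $ i $ j\<bar>)"

text \<open>Kronecker product; row index (i,k), column index (j,l) (lexicographic block indexing).\<close>
definition kron :: "real^'b^'a \<Rightarrow> real^'d^'c \<Rightarrow> real^('b \<times> 'd)^('a \<times> 'c)" where
  "kron P Q = (\<chi> ik jl. P $ fst ik $ fst jl * Q $ snd ik $ snd jl)"

definition col_diag_dom :: "real^'n^'n \<Rightarrow> bool" where
  "col_diag_dom M \<longleftrightarrow> (\<forall>j. \<bar>M $ j $ j\<bar> \<ge> (\<Sum>i\<in>UNIV - {j}. \<bar>M $ i $ j\<bar>))"

definition strict_col_diag_dom :: "real^'n^'n \<Rightarrow> bool" where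
  "strict_col_diag_dom M \<longleftrightarrow> (\<forall>j. \<bar>M $ j $ j\<bar> > (\<Sum>i\<in>UNIV - {j}. \<bar>M $ i $ j\<bar>))"

text \<open>Reducible: there is a nonempty proper index set J with M i j = 0 for i in J, j not in J
  (i.e. M is permutation-similar to a block triangular matrix).\<close>
definition irreducible_mat :: "real^'n^'n \<Rightarrow> bool" where
  "irreducible_mat M \<longleftrightarrow>
     \<not> (\<exists>J. J \<noteq> {} \<and> J \<noteq> UNIV \<and> (\<forall>i\<in>J. \<forall>j\<in>UNIV - J. M $ i $ j = 0))"

definition irred_col_diag_dom :: "real^'n^'n \<Rightarrow> bool" where
  "irred_col_diag_dom M \<longleftrightarrow> irreducible_mat M \<and> col_diag_dom M \<and>
     (\<exists>j. \<bar>M $ j $ j\<bar> > (\<Sum>i\<in>UNIV - {j}. \<bar>M $ i $ j\<bar>))"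

definition column_reps :: "real^'n^'m \<Rightarrow> real^'n^'m \<Rightarrow> (real^'n^'m) set" where
  "column_reps M1 M2 = {M. \<forall>j. column j M = column j M1 \<or> column j M = column j M2}"

end

theory Submission
  imports Defs "HOL-Analysis.Analysis"
begin


definition d1 :: "real^'n^'n \<Rightarrow> real^'n^'n \<Rightarrow> real" where
  "d1 Z W = (\<Sum>i\<in>UNIV. \<Sum>c\<in>UNIV. \<bar>Z$i$c - W$i$c\<bar>)"

lemma dist_le_d1: "dist Z W \<le> d1 Z W"
proof -
  have "dist Z W = norm (Z - W)" by (simp add: dist_norm)
  also have "\<dots> \<le> (\<Sum>i\<in>UNIV. norm ((Z - W)$i))"
    unfolding norm_vec_def by (rule L2_set_le_sum) simp
  also have "\<dots> \<le> (\<Sum>i\<in>UNIV. \<Sum>c\<in>UNIV. \<bar>(Z - W)$i$c\<bar>)"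
    by (rule sum_mono) (rule norm_le_l1_cart)
  finally show ?thesis by (simp add: d1_def)
qed

lemma d1_le_dist: "d1 Z W \<le> real (CARD('n)) * real (CARD('n)) * dist Z W"
  for Z W :: "real^'n^'n"
proof -
  have "d1 Z W \<le> (\<Sum>i\<in>(UNIV::'n set). \<Sum>c\<in>(UNIV::'n set). dist Z W)"
    unfolding d1_def
  proof (intro sum_mono)
    fix i c
    have "\<bar>(Z - W)$i$c\<bar> \<le> norm ((Z-W)$i)" by (rule component_le_norm_cart)
    also have "\<dots> \<le> norm (Z - W)" by (rule Finite_Cartesian_Product.norm_nth_le)
    finally show "\<bar>Z$i$c - W$i$c\<bar> \<le> dist Z W" by (simp add: dist_norm)
  qed
  then show ?thesis by (simp add: mult.assoc)
qed

lemma d1_nonneg: "0 \<le> d1 Z W"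
  unfolding d1_def by (intro sum_nonneg) auto

lemma contraction_fix:
  fixes T :: "real^'n^'n \<Rightarrow> real^'n^'n"
  assumes k0: "0 \<le> k" and k1: "k < 1"
    and con: "\<And>Z W. d1 (T Z) (T W) \<le> k * d1 Z W"
  shows "\<exists>!Z. T Z = Z"
proof -
  define K where "K = real (CARD('n)) * real (CARD('n))"
  have K0: "0 \<le> K" by (simp add: K_def)
  have pw: "d1 ((T^^m) Z) ((T^^m) W) \<le> k^m * d1 Z W" for m Z W
  proof (induction m)
    case 0 then show ?case by simp
  next
    case (Suc m)
    have "d1 ((T^^Suc m) Z) ((T^^Suc m) W) \<le> k * d1 ((T^^m) Z) ((T^^m) W)"
      using con by simp
    also have "\<dots> \<le> k * (k^m * d1 Z W)" using Suc k0 by (simp add: mult_left_mono)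
    finally show ?case by (simp add: mult.assoc)
  qed
  have "(\<lambda>m. k^m) \<longlonglongrightarrow> 0" using k0 k1 by (intro LIMSEQ_power_zero) auto
  then have "\<forall>\<^sub>F m in sequentially. k^m < 1 / (K + 1)"
    using K0 by (intro order_tendstoD) auto
  then obtain m where m: "k^m < 1 / (K+1)" by (meson eventually_sequentially order.refl)
  have c1: "k^m * K < 1"
  proof -
    have "k^m * K \<le> 1/(K+1) * K" using m K0 by (intro mult_right_mono) auto
    also have "\<dots> < 1" using K0 by (simp add: field_simps)
    finally show ?thesis .
  qed
  have c0: "0 \<le> k^m * K" using k0 K0 by simp
  have lip: "\<forall>x y. dist ((T^^m) x) ((T^^m) y) \<le> (k^m * K) * dist x y"
  proof (intro allI)
    fix x y
    have "dist ((T^^m) x) ((T^^m) y) \<le> d1 ((T^^m) x) ((T^^m) y)" by (rule dist_le_d1)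
    also have "\<dots> \<le> k^m * d1 x y" by (rule pw)
    also have "\<dots> \<le> k^m * (K * dist x y)"
      using d1_le_dist[of x y] k0 by (intro mult_left_mono) (auto simp: K_def)
    finally show "dist ((T^^m) x) ((T^^m) y) \<le> (k^m * K) * dist x y" by (simp add: mult.assoc)
  qed
  obtain z where z: "(T^^m) z = z" and zu: "\<And>y. (T^^m) y = y \<Longrightarrow> y = z"
    using banach_fix_type[OF c0 c1 lip] by blast
  have "(T^^m) (T z) = T z" by (metis funpow_swap1 z)
  then have Tz: "T z = z" using zu by blast
  have "(T^^n) a = a" if "T a = a" for a n
    using that by (induction n) auto
  then show ?thesis using Tz zu by blast
qed



lemma sum_split_at:
  fixes f :: "'n::finite \<Rightarrow> real"
  shows "(\<Sum>k\<in>UNIV. f k) = f i + (\<Sum>k\<in>UNIV. if k = i then 0 else f k)"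
proof -
  have "(\<Sum>k\<in>UNIV. f k) = (\<Sum>k\<in>UNIV. (if k = i then f k else 0) + (if k = i then 0 else f k))"
    by (intro sum.cong) auto
  also have "\<dots> = f i + (\<Sum>k\<in>UNIV. if k = i then 0 else f k)"
    by (simp add: sum.distrib)
  finally show ?thesis .
qed

lemma sum_minus_if:
  fixes f :: "'n::finite \<Rightarrow> real"
  shows "(\<Sum>k\<in>UNIV - {i}. f k) = (\<Sum>k\<in>UNIV. if k = i then 0 else f k)"
  using sum_split_at[of f i] by (simp add: sum_diff1)

definition hh :: "real^'n^'n \<Rightarrow> real^'n^'n \<Rightarrow> real^'n^'n \<Rightarrow> real^'n^'n" where
  "hh M B Y = (\<chi> k c. M$k$k * Y$k$c + B$k$k * \<bar>Y$k$c\<bar>)"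

definition hinv :: "real^'n^'n \<Rightarrow> real^'n^'n \<Rightarrow> real^'n^'n \<Rightarrow> real^'n^'n" where
  "hinv M B Z = (\<chi> k c. if Z$k$c / (M+B)$k$k \<ge> 0 then Z$k$c / (M+B)$k$k else Z$k$c / (M-B)$k$k)"

definition NN :: "real^'n^'n \<Rightarrow> real^'n^'n \<Rightarrow> real^'n^'n \<Rightarrow> real^'n^'n" where
  "NN M B Y = (\<chi> i c. \<Sum>k\<in>UNIV. if k = i then 0 else M$i$k * Y$k$c + B$i$k * \<bar>Y$k$c\<bar>)"

lemma eq_split: "M ** Y + B ** mat_abs Y = hh M B Y + NN M B Y"
proof -
  have "(\<Sum>k\<in>UNIV. M$i$k * Y$k$c) + (\<Sum>k\<in>UNIV. B$i$k * \<bar>Y$k$c\<bar>)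
      = (M$i$i * Y$i$c + B$i$i * \<bar>Y$i$c\<bar>)
       + (\<Sum>k\<in>UNIV. if k = i then 0 else M$i$k * Y$k$c + B$i$k * \<bar>Y$k$c\<bar>)" for i c
    using sum_split_at[of "\<lambda>k. M$i$k * Y$k$c + B$i$k * \<bar>Y$k$c\<bar>" i]
    by (simp add: sum.distrib)
  then show ?thesis
    by (simp add: vec_eq_iff matrix_matrix_mult_def mat_abs_def hh_def NN_def)
qed


lemma hh_scal: "(M::real^'n^'n)$k$k * (y::real) + B$k$k * \<bar>y\<bar> = (if y \<ge> 0 then (M+B)$k$k * y else (M-B)$k$k * y)"
  by (cases "y \<ge> 0") (auto simp: algebra_simps)

lemma scal1:
  fixes p q y :: real
  assumes "p * q > 0"
  shows "(let z = (if y \<ge> 0 then p * y else q * y) in if z / p \<ge> 0 then z / p else z / q) = y"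
proof (cases "y \<ge> 0")
  case True
  then show ?thesis using assms by auto
next
  case False
  have "q * y / p < 0" using assms False
    by (smt (verit, best) divide_less_0_iff mult_neg_pos mult_pos_neg zero_less_mult_iff)
  then show ?thesis using assms False by (auto simp: Let_def)
qed

lemma scal2:
  fixes p q z :: real
  assumes "p * q > 0"
  shows "(let y = (if z / p \<ge> 0 then z / p else z / q) in if y \<ge> 0 then p * y else q * y) = z"
proof (cases "z / p \<ge> 0")
  case True
  then show ?thesis using assms by auto
next
  case False
  have "z / q < 0" using assms False
    by (smt (verit, best) divide_less_0_iff mult_neg_pos mult_pos_neg zero_less_mult_iff)
  then show ?thesis using assms False by (auto simp: Let_def)
qed

lemma hinv_hh:
  assumes "\<forall>k. (M+B)$k$k * (M-B)$k$k > 0"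
  shows "hinv M B (hh M B Y) = Y"
proof -
  have "hinv M B (hh M B Y) $ k $ c = Y $ k $ c" for k c
    using scal1[OF assms[rule_format, of k], of "Y$k$c"]
    unfolding hinv_def hh_def Let_def by (simp only: vec_lambda_beta hh_scal)
  then show ?thesis by (simp add: vec_eq_iff)
qed

lemma hh_hinv:
  assumes "\<forall>k. (M+B)$k$k * (M-B)$k$k > 0"
  shows "hh M B (hinv M B Z) = Z"
proof -
  have "hh M B (hinv M B Z) $ k $ c = Z $ k $ c" for k c
    using scal2[OF assms[rule_format, of k], of "Z$k$c"]
    unfolding hinv_def hh_def Let_def by (simp only: vec_lambda_beta hh_scal)
  then show ?thesis by (simp add: vec_eq_iff)
qed


lemma abs_same_sign: "(x::real) * y \<ge> 0 \<Longrightarrow> \<bar>x + y\<bar> = \<bar>x\<bar> + \<bar>y\<bar>"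
  by (smt (verit) mult_nonneg_nonpos mult_nonpos_nonneg zero_le_mult_iff)

lemma col_claim:
  fixes M B :: "real^'n^'n" and u w k :: real
  assumes uw: "\<bar>w\<bar> \<le> \<bar>u\<bar>" and pq: "(M+B)$j$j * (M-B)$j$j > 0"
    and dP: "(\<Sum>i\<in>UNIV. if i = j then 0 else \<bar>(M+B)$i$j\<bar>) \<le> k * \<bar>(M+B)$j$j\<bar>"
    and dQ: "(\<Sum>i\<in>UNIV. if i = j then 0 else \<bar>(M-B)$i$j\<bar>) \<le> k * \<bar>(M-B)$j$j\<bar>"
  shows "(\<Sum>i\<in>UNIV. if i = j then 0 else \<bar>M$i$j * u + B$i$j * w\<bar>) \<le> k * \<bar>M$j$j * u + B$j$j * w\<bar>"
proof -
  define a where "a = (u + w) / 2"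
  define b where "b = (u - w) / 2"
  have ab: "a * b \<ge> 0"
  proof -
    have "a * b = (u*u - w*w) / 4" by (simp add: a_def b_def field_simps)
    moreover have "w*w \<le> u*u" using uw by (metis abs_mult_self_eq abs_ge_zero mult_mono)
    ultimately show ?thesis by simp
  qed
  have rep: "M$i$j * u + B$i$j * w = a * (M+B)$i$j + b * (M-B)$i$j" for i
    by (simp add: a_def b_def field_simps)
  have "(\<Sum>i\<in>UNIV. if i = j then 0 else \<bar>M$i$j * u + B$i$j * w\<bar>)
      \<le> (\<Sum>i\<in>UNIV. \<bar>a\<bar> * (if i = j then 0 else \<bar>(M+B)$i$j\<bar>) + \<bar>b\<bar> * (if i = j then 0 else \<bar>(M-B)$i$j\<bar>))"
  proof (rule sum_mono)
    fix i
    have "\<bar>a * (M+B)$i$j + b * (M-B)$i$j\<bar> \<le> \<bar>a\<bar> * \<bar>(M+B)$i$j\<bar> + \<bar>b\<bar> * \<bar>(M-B)$i$j\<bar>"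
      by (metis abs_mult abs_triangle_ineq)
    then show "(if i = j then 0 else \<bar>M$i$j * u + B$i$j * w\<bar>)
      \<le> \<bar>a\<bar> * (if i = j then 0 else \<bar>(M+B)$i$j\<bar>) + \<bar>b\<bar> * (if i = j then 0 else \<bar>(M-B)$i$j\<bar>)"
      by (simp only: rep) simp
  qed
  also have "\<dots> = \<bar>a\<bar> * (\<Sum>i\<in>UNIV. if i = j then 0 else \<bar>(M+B)$i$j\<bar>) + \<bar>b\<bar> * (\<Sum>i\<in>UNIV. if i = j then 0 else \<bar>(M-B)$i$j\<bar>)"
    by (simp add: sum.distrib sum_distrib_left)
  also have "\<dots> \<le> \<bar>a\<bar> * (k * \<bar>(M+B)$j$j\<bar>) + \<bar>b\<bar> * (k * \<bar>(M-B)$j$j\<bar>)"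
    using dP dQ by (intro add_mono mult_left_mono) auto
  also have "\<dots> = k * (\<bar>a * (M+B)$j$j\<bar> + \<bar>b * (M-B)$j$j\<bar>)"
    by (simp only: abs_mult) (simp add: algebra_simps)
  also have "\<bar>a * (M+B)$j$j\<bar> + \<bar>b * (M-B)$j$j\<bar> = \<bar>a * (M+B)$j$j + b * (M-B)$j$j\<bar>"
  proof -
    have "(a * (M+B)$j$j) * (b * (M-B)$j$j) = (a*b) * ((M+B)$j$j * (M-B)$j$j)" by simp
    also have "\<dots> \<ge> 0" using ab pq by simp
    finally show ?thesis by (simp add: abs_same_sign)
  qed
  also have "a * (M+B)$j$j + b * (M-B)$j$j = M$j$j * u + B$j$j * w" by (simp add: rep)
  finally show ?thesis .
qed


definition TT :: "real^'n^'n \<Rightarrow> real^'n^'n \<Rightarrow> real^'n^'n \<Rightarrow> real^'n^'n \<Rightarrow> real^'n^'n" where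
  "TT M B F Z = F - NN M B (hinv M B Z)"

lemma abs_abs_diff: "\<bar>\<bar>x\<bar> - \<bar>y\<bar>\<bar> \<le> \<bar>x - (y::real)\<bar>"
  by (rule abs_triangle_ineq3)

lemma TT_contr:
  fixes M B F :: "real^'n^'n"
  assumes pq: "\<forall>j. (M+B)$j$j * (M-B)$j$j > 0"
    and dP: "\<forall>j. (\<Sum>i\<in>UNIV. if i = j then 0 else \<bar>(M+B)$i$j\<bar>) \<le> k * \<bar>(M+B)$j$j\<bar>"
    and dQ: "\<forall>j. (\<Sum>i\<in>UNIV. if i = j then 0 else \<bar>(M-B)$i$j\<bar>) \<le> k * \<bar>(M-B)$j$j\<bar>"
  shows "d1 (TT M B F Z) (TT M B F W) \<le> k * d1 Z W"
proof -
  define Y where "Y = hinv M B Z"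
  define V where "V = hinv M B W"
  have Z: "Z = hh M B Y" using hh_hinv[OF pq] by (simp add: Y_def)
  have W: "W = hh M B V" using hh_hinv[OF pq] by (simp add: V_def)
  define g where "g i c j = (if j = i then 0 else \<bar>M$i$j * (Y$j$c - V$j$c) + B$i$j * (\<bar>Y$j$c\<bar> - \<bar>V$j$c\<bar>)\<bar>)" for i c j
  have e1: "\<bar>TT M B F Z $i$c - TT M B F W $i$c\<bar> \<le> (\<Sum>j\<in>UNIV. g i c j)" for i c
  proof -
    have "TT M B F Z $i$c - TT M B F W $i$c = NN M B V $i$c - NN M B Y $i$c"
      by (simp add: TT_def Y_def V_def)
    also have "\<dots> = - (\<Sum>j\<in>UNIV. if j = i then 0 else M$i$j * (Y$j$c - V$j$c) + B$i$j * (\<bar>Y$j$c\<bar> - \<bar>V$j$c\<bar>))"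
      unfolding NN_def vec_lambda_beta sum_subtractf[symmetric] sum_negf[symmetric]
      by (intro sum.cong) (auto simp: algebra_simps)
    finally have "\<bar>TT M B F Z $i$c - TT M B F W $i$c\<bar> = \<bar>\<Sum>j\<in>UNIV. if j = i then 0 else M$i$j * (Y$j$c - V$j$c) + B$i$j * (\<bar>Y$j$c\<bar> - \<bar>V$j$c\<bar>)\<bar>"
      by simp
    also have "\<dots> \<le> (\<Sum>j\<in>UNIV. \<bar>if j = i then 0 else M$i$j * (Y$j$c - V$j$c) + B$i$j * (\<bar>Y$j$c\<bar> - \<bar>V$j$c\<bar>)\<bar>)"
      by (rule sum_abs)
    also have "\<dots> = (\<Sum>j\<in>UNIV. g i c j)" by (intro sum.cong) (auto simp: g_def)
    finally show ?thesis .
  qed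
  have e2: "(\<Sum>i\<in>UNIV. g i c j) \<le> k * \<bar>Z$j$c - W$j$c\<bar>" for j c
  proof -
    have "(\<Sum>i\<in>UNIV. g i c j) \<le> k * \<bar>M$j$j * (Y$j$c - V$j$c) + B$j$j * (\<bar>Y$j$c\<bar> - \<bar>V$j$c\<bar>)\<bar>"
    proof -
      have "(\<Sum>i\<in>UNIV. g i c j) = (\<Sum>i\<in>UNIV. if i = j then 0 else \<bar>M$i$j * (Y$j$c - V$j$c) + B$i$j * (\<bar>Y$j$c\<bar> - \<bar>V$j$c\<bar>)\<bar>)"
        by (intro sum.cong) (simp_all add: g_def)
      also have "\<dots> \<le> k * \<bar>M$j$j * (Y$j$c - V$j$c) + B$j$j * (\<bar>Y$j$c\<bar> - \<bar>V$j$c\<bar>)\<bar>"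
        by (rule col_claim[OF abs_abs_diff pq[rule_format] dP[rule_format] dQ[rule_format]])
      finally show ?thesis .
    qed
    also have "M$j$j * (Y$j$c - V$j$c) + B$j$j * (\<bar>Y$j$c\<bar> - \<bar>V$j$c\<bar>) = Z$j$c - W$j$c"
      by (simp add: Z W hh_def algebra_simps)
    finally show ?thesis .
  qed
  have "d1 (TT M B F Z) (TT M B F W) \<le> (\<Sum>i\<in>UNIV. \<Sum>c\<in>UNIV. \<Sum>j\<in>UNIV. g i c j)"
    unfolding d1_def by (intro sum_mono e1)
  also have "\<dots> = (\<Sum>c\<in>UNIV. \<Sum>j\<in>UNIV. \<Sum>i\<in>UNIV. g i c j)"
    by (subst sum.swap) (rule sum.cong[OF refl], rule sum.swap)
  also have "\<dots> \<le> (\<Sum>c\<in>UNIV. \<Sum>j\<in>UNIV. k * \<bar>Z$j$c - W$j$c\<bar>)"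
    by (intro sum_mono e2)
  also have "\<dots> = k * d1 Z W"
    unfolding d1_def sum_distrib_left by (rule sum.swap)
  finally show ?thesis .
qed


lemma Y_unique:
  fixes M B F :: "real^'n^'n"
  assumes pq: "\<forall>j. (M+B)$j$j * (M-B)$j$j > 0"
    and sP: "\<forall>j. (\<Sum>i\<in>UNIV - {j}. \<bar>(M+B)$i$j\<bar>) < \<bar>(M+B)$j$j\<bar>"
    and sQ: "\<forall>j. (\<Sum>i\<in>UNIV - {j}. \<bar>(M-B)$i$j\<bar>) < \<bar>(M-B)$j$j\<bar>"
  shows "\<exists>!Y. M ** Y + B ** mat_abs Y = F"
proof -
  define oP where "oP j = (\<Sum>i\<in>UNIV. if i = j then 0 else \<bar>(M+B)$i$j\<bar>)" for j
  define oQ where "oQ j = (\<Sum>i\<in>UNIV. if i = j then 0 else \<bar>(M-B)$i$j\<bar>)" for j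
  have sP': "oP j < \<bar>(M+B)$j$j\<bar>" for j using sP unfolding oP_def sum_minus_if by blast
  have sQ': "oQ j < \<bar>(M-B)$j$j\<bar>" for j using sQ unfolding oQ_def sum_minus_if by blast
  have oP0: "oP j \<ge> 0" for j unfolding oP_def by (intro sum_nonneg) auto
  have oQ0: "oQ j \<ge> 0" for j unfolding oQ_def by (intro sum_nonneg) auto
  have nP: "\<bar>(M+B)$j$j\<bar> > 0" for j using sP' oP0 by (meson le_less_trans)
  have nQ: "\<bar>(M-B)$j$j\<bar> > 0" for j using sQ' oQ0 by (meson le_less_trans)
  define kk where "kk j = max (oP j / \<bar>(M+B)$j$j\<bar>) (oQ j / \<bar>(M-B)$j$j\<bar>)" for j
  define k where "k = Max (range kk)"
  have kk1: "kk j < 1" for j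
    unfolding kk_def using sP' sQ' nP nQ by (simp add: divide_less_eq)
  have kk0: "kk j \<ge> 0" for j
    unfolding kk_def using oP0 nP by (simp add: le_max_iff_disj)
  have kge: "kk j \<le> k" for j unfolding k_def by (rule Max_ge) auto
  have k1: "k < 1" unfolding k_def using kk1 Max_in[of "range kk"] by auto
  have k0: "0 \<le> k" using kk0 kge order_trans by blast
  have dP: "\<forall>j. oP j \<le> k * \<bar>(M+B)$j$j\<bar>"
  proof
    fix j
    have "oP j / \<bar>(M+B)$j$j\<bar> \<le> k" using kge[of j] unfolding kk_def by simp
    then show "oP j \<le> k * \<bar>(M+B)$j$j\<bar>" using nP[of j] by (simp add: pos_divide_le_eq)
  qed
  have dQ: "\<forall>j. oQ j \<le> k * \<bar>(M-B)$j$j\<bar>"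
  proof
    fix j
    have "oQ j / \<bar>(M-B)$j$j\<bar> \<le> k" using kge[of j] unfolding kk_def by simp
    then show "oQ j \<le> k * \<bar>(M-B)$j$j\<bar>" using nQ[of j] by (simp add: pos_divide_le_eq)
  qed
  have "\<exists>!Z. TT M B F Z = Z"
    by (rule contraction_fix[OF k0 k1 TT_contr[OF pq dP[unfolded oP_def] dQ[unfolded oQ_def]]])
  then obtain Z where Z: "TT M B F Z = Z" and Zu: "\<And>W. TT M B F W = W \<Longrightarrow> W = Z" by blast
  have sol: "M ** Y + B ** mat_abs Y = F \<longleftrightarrow> TT M B F (hh M B Y) = hh M B Y" for Y
  proof -
    have "M ** Y + B ** mat_abs Y = F \<longleftrightarrow> hh M B Y + NN M B Y = F" by (simp add: eq_split)
    also have "\<dots> \<longleftrightarrow> F - NN M B Y = hh M B Y" by (auto simp: algebra_simps)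
    also have "\<dots> \<longleftrightarrow> TT M B F (hh M B Y) = hh M B Y" by (simp add: TT_def hinv_hh[OF pq])
    finally show ?thesis .
  qed
  show ?thesis
  proof
    show "M ** hinv M B Z + B ** mat_abs (hinv M B Z) = F"
      using sol[of "hinv M B Z"] Z by (simp add: hh_hinv[OF pq])
  next
    fix Y assume "M ** Y + B ** mat_abs Y = F"
    then have "hh M B Y = Z" using sol Zu by blast
    then show "Y = hinv M B Z" using hinv_hh[OF pq] by metis
  qed
qed



lemma kron_I_entry: "kron (mat 1 :: real^'n^'n) K $ p $ q = (if fst p = fst q then K $ snd p $ snd q else 0)"
  by (simp add: kron_def mat_def)

lemma kron_add: "kron (mat 1 :: real^'n^'n) M + kron (mat 1) B = kron (mat 1) (M + B)"
  by (simp add: vec_eq_iff kron_I_entry)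

lemma kron_diff: "kron (mat 1 :: real^'n^'n) M - kron (mat 1) B = kron (mat 1) (M - B)"
  by (simp add: vec_eq_iff kron_I_entry)

lemma strict_kron:
  fixes K :: "real^'n^'n"
  assumes "strict_col_diag_dom (kron (mat 1 :: real^'n^'n) K)"
  shows "\<forall>j. (\<Sum>i\<in>UNIV - {j}. \<bar>K$i$j\<bar>) < \<bar>K$j$j\<bar>"
proof
  fix j :: 'n
  obtain c :: 'n where True by blast
  have "(\<Sum>i\<in>UNIV - {j}. \<bar>K$i$j\<bar>) = (\<Sum>p\<in>(\<lambda>i. (c,i)) ` (UNIV - {j}). \<bar>kron (mat 1 :: real^'n^'n) K $ p $ (c,j)\<bar>)"
    by (subst sum.reindex) (auto simp: inj_on_def kron_I_entry)
  also have "\<dots> \<le> (\<Sum>p\<in>UNIV - {(c,j)}. \<bar>kron (mat 1 :: real^'n^'n) K $ p $ (c,j)\<bar>)"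
    by (rule sum_mono2) auto
  also have "\<dots> < \<bar>kron (mat 1 :: real^'n^'n) K $ (c,j) $ (c,j)\<bar>"
    using assms unfolding strict_col_diag_dom_def by blast
  also have "\<dots> = \<bar>K$j$j\<bar>" by (simp add: kron_I_entry)
  finally show "(\<Sum>i\<in>UNIV - {j}. \<bar>K$i$j\<bar>) < \<bar>K$j$j\<bar>" .
qed

lemma irred_kron:
  fixes K :: "real^'n^'n"
  assumes "irred_col_diag_dom (kron (mat 1 :: real^'n^'n) K)"
  shows "strict_col_diag_dom (kron (mat 1 :: real^'n^'n) K)"
proof (cases "\<exists>a b :: 'n. a \<noteq> b")
  case True
  then obtain a b :: 'n where ab: "a \<noteq> b" by blast
  obtain x :: 'n where True by blast
  define J where "J = {p :: 'n \<times> 'n. fst p = a}"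
  have "(a,x) \<in> J" by (simp add: J_def)
  then have J1: "J \<noteq> {}" by blast
  have "(b,x) \<notin> J" using ab by (simp add: J_def)
  then have J2: "J \<noteq> UNIV" by blast
  have J3: "\<forall>i\<in>J. \<forall>j\<in>UNIV - J. kron (mat 1 :: real^'n^'n) K $ i $ j = 0"
  proof (intro ballI)
    fix i j assume "i \<in> J" "j \<in> UNIV - J"
    then have "fst i \<noteq> fst j" by (simp add: J_def)
    then show "kron (mat 1 :: real^'n^'n) K $ i $ j = 0" by (simp add: kron_I_entry)
  qed
  have "\<exists>J. J \<noteq> {} \<and> J \<noteq> UNIV \<and> (\<forall>i\<in>J. \<forall>j\<in>UNIV - J. kron (mat 1 :: real^'n^'n) K $ i $ j = 0)"
    using J1 J2 J3 by (intro exI[of _ J] conjI)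
  then have "\<not> irreducible_mat (kron (mat 1 :: real^'n^'n) K)"
    unfolding irreducible_mat_def by (intro notI) (erule notE)
  moreover have "irreducible_mat (kron (mat 1 :: real^'n^'n) K)"
    using assms unfolding irred_col_diag_dom_def by (rule conjunct1)
  ultimately show ?thesis by (rule notE)
next
  case False
  have all: "\<forall>p q :: 'n \<times> 'n. p = q"
  proof (intro allI)
    fix p q :: "'n \<times> 'n"
    have "fst p = fst q" using False by blast
    moreover have "snd p = snd q" using False by blast
    ultimately show "p = q" by (rule prod_eqI)
  qed
  from assms obtain j0 where
    "\<bar>kron (mat 1 :: real^'n^'n) K $ j0 $ j0\<bar> > (\<Sum>i\<in>UNIV - {j0}. \<bar>kron (mat 1 :: real^'n^'n) K $ i $ j0\<bar>)"
    unfolding irred_col_diag_dom_def by blast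
  then show ?thesis unfolding strict_col_diag_dom_def
  proof (intro allI)
    fix j
    assume h: "\<bar>kron (mat 1 :: real^'n^'n) K $ j0 $ j0\<bar> > (\<Sum>i\<in>UNIV - {j0}. \<bar>kron (mat 1 :: real^'n^'n) K $ i $ j0\<bar>)"
    have "j = j0" by (rule all[rule_format])
    then show "\<bar>kron (mat 1 :: real^'n^'n) K $ j $ j\<bar> > (\<Sum>i\<in>UNIV - {j}. \<bar>kron (mat 1 :: real^'n^'n) K $ i $ j\<bar>)"
      using h by simp
  qed
qed

lemma sgn_prod_pos: "sgn (a::real) = sgn b \<Longrightarrow> a \<noteq> 0 \<Longrightarrow> a * b > 0"
  by (auto simp: sgn_if zero_less_mult_iff split: if_splits)

lemma disj_helper: "(P \<and> Q) \<or> (R \<and> S \<and> T) \<Longrightarrow> (P \<and> Q) \<or> (R \<and> S)" by blast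

theorem theorem4p4:
  fixes A B C F :: "real^'n^'n"
  assumes "invertible C"
    and "\<forall>p. sgn ((kron (mat 1 :: real^'n^'n) (A ** matrix_inv C) + kron (mat 1 :: real^'n^'n) B) $ p $ p)
            = sgn ((kron (mat 1 :: real^'n^'n) (A ** matrix_inv C) - kron (mat 1 :: real^'n^'n) B) $ p $ p)"
    and "(strict_col_diag_dom (kron (mat 1 :: real^'n^'n) (A ** matrix_inv C) + kron (mat 1 :: real^'n^'n) B)
          \<and> strict_col_diag_dom (kron (mat 1 :: real^'n^'n) (A ** matrix_inv C) - kron (mat 1 :: real^'n^'n) B))
       \<or> (irred_col_diag_dom (kron (mat 1 :: real^'n^'n) (A ** matrix_inv C) + kron (mat 1 :: real^'n^'n) B)
          \<and> irred_col_diag_dom (kron (mat 1 :: real^'n^'n) (A ** matrix_inv C) - kron (mat 1 :: real^'n^'n) B)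
          \<and> (\<forall>M \<in> column_reps (kron (mat 1 :: real^'n^'n) (A ** matrix_inv C) + kron (mat 1 :: real^'n^'n) B)
                                (kron (mat 1 :: real^'n^'n) (A ** matrix_inv C) - kron (mat 1 :: real^'n^'n) B).
               irred_col_diag_dom M))"
  shows "\<exists>!X :: real^'n^'n. A ** X + B ** mat_abs (C ** X) = F"
proof -
  define M where "M = A ** matrix_inv C"
  have h3: "(strict_col_diag_dom (kron (mat 1 :: real^'n^'n) (M + B))
          \<and> strict_col_diag_dom (kron (mat 1 :: real^'n^'n) (M - B)))
       \<or> (irred_col_diag_dom (kron (mat 1 :: real^'n^'n) (M + B))
          \<and> irred_col_diag_dom (kron (mat 1 :: real^'n^'n) (M - B)))"
    by (rule disj_helper[OF assms(3)[unfolded M_def[symmetric] kron_add kron_diff]])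
  have st: "strict_col_diag_dom (kron (mat 1 :: real^'n^'n) (M + B))
          \<and> strict_col_diag_dom (kron (mat 1 :: real^'n^'n) (M - B))"
  proof (rule disjE[OF h3])
    assume "strict_col_diag_dom (kron (mat 1 :: real^'n^'n) (M + B))
          \<and> strict_col_diag_dom (kron (mat 1 :: real^'n^'n) (M - B))"
    then show ?thesis .
  next
    assume a: "irred_col_diag_dom (kron (mat 1 :: real^'n^'n) (M + B))
          \<and> irred_col_diag_dom (kron (mat 1 :: real^'n^'n) (M - B))"
    show ?thesis using irred_kron[OF conjunct1[OF a]] irred_kron[OF conjunct2[OF a]] by (rule conjI)
  qed
  have sP: "\<forall>j. (\<Sum>i\<in>UNIV - {j}. \<bar>(M+B)$i$j\<bar>) < \<bar>(M+B)$j$j\<bar>"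
    by (rule strict_kron[OF conjunct1[OF st]])
  have sQ: "\<forall>j. (\<Sum>i\<in>UNIV - {j}. \<bar>(M-B)$i$j\<bar>) < \<bar>(M-B)$j$j\<bar>"
    by (rule strict_kron[OF conjunct2[OF st]])
  have pq: "\<forall>j. (M+B)$j$j * (M-B)$j$j > 0"
  proof
    fix j :: 'n
    obtain c :: 'n where True by blast
    have "sgn ((M+B)$j$j) = sgn ((M-B)$j$j)"
      using assms(2)[rule_format, of "(c,j)"] unfolding M_def[symmetric] kron_add kron_diff
      by (simp only: kron_I_entry fst_conv snd_conv simp_thms if_True)
    moreover have "(M+B)$j$j \<noteq> 0"
    proof -
      have "0 \<le> (\<Sum>i\<in>UNIV - {j}. \<bar>(M+B)$i$j\<bar>)" by (intro sum_nonneg) auto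
      then have "\<bar>(M+B)$j$j\<bar> > 0" using sP[rule_format, of j] by linarith
      then show ?thesis by auto
    qed
    ultimately show "(M+B)$j$j * (M-B)$j$j > 0" by (rule sgn_prod_pos)
  qed
  obtain Y where Y: "M ** Y + B ** mat_abs Y = F" and Yu: "\<And>Y'. M ** Y' + B ** mat_abs Y' = F \<Longrightarrow> Y' = Y"
    using Y_unique[OF pq sP sQ, of F] by (elim ex1E) blast
  have CI0: "C ** matrix_inv C = mat 1 \<and> matrix_inv C ** C = mat 1"
    using assms(1) unfolding invertible_def matrix_inv_def by (rule someI_ex)
  have CI1: "C ** matrix_inv C = mat 1" using CI0 by blast
  have CI2: "matrix_inv C ** C = mat 1" using CI0 by blast
  have AX: "A ** X = M ** (C ** X)" for X
  proof -
    have "M ** (C ** X) = A ** (matrix_inv C ** C ** X)"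
      unfolding M_def by (simp only: matrix_mul_assoc)
    also have "\<dots> = A ** X" by (simp only: CI2 matrix_mul_lid)
    finally show ?thesis by simp
  qed
  have CCY: "C ** (matrix_inv C ** Y) = Y"
    by (simp only: matrix_mul_assoc CI1 matrix_mul_lid)
  show ?thesis
  proof
    show "A ** (matrix_inv C ** Y) + B ** mat_abs (C ** (matrix_inv C ** Y)) = F"
      unfolding AX[of "matrix_inv C ** Y"] CCY by (rule Y)
  next
    fix X assume "A ** X + B ** mat_abs (C ** X) = F"
    then have "M ** (C ** X) + B ** mat_abs (C ** X) = F" by (simp only: AX)
    then have "C ** X = Y" by (rule Yu)
    then have "matrix_inv C ** (C ** X) = matrix_inv C ** Y" by simp
    then show "X = matrix_inv C ** Y" by (simp only: matrix_mul_assoc CI2 matrix_mul_lid)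
  qed
qed

end
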